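(* Consider the discrete-time, time-varying affine system $$x(t+1)=A(t)x(t)+B(t)u(t)+s+w(t),\qquad t=0,\dots,T-1,$$ with $x(t)\in\mathbb{R}^n$, $u(t)\in\mathbb{R}^m$, $s\in\mathbb{R}^n$, under an affine (causal, time-varying) state-feedback policy $\mathbf{u}=\mathbf{K}\mathbf{x}+\mathbf{u_s}$, where $\mathbf{K}\in\mathbb{R}^{m(T+1)\times n(T+1)}$ is block lower triangular (blocks of size $m\times n$) and $\mathbf{u_s}\in\mathbb{R}^{m(T+1)}$. Define $$\boldsymbol{\Phi_x}=(I-\mathcal{Z}\mathcal{A}-\mathcal{Z}\mathcal{B}\mathbf{K})^{-1},\quad \boldsymbol{\phi_x}=\boldsymbol{\Phi_x}\mathcal{Z}(\mathcal{B}\mathbf{u_s}+\mathbf{s}),$$ $$\boldsymbol{\Phi_u}=\mathbf{K}(I-\mathcal{Z}\mathcal{A}-\mathcal{Z}\mathcal{B}\mathbf{K})^{-1},\quad \boldsymbol{\phi_u}=\boldsymbol{\Phi_u}\mathcal{Z}(\mathcal{B}\mathbf{u_s}+\mathbf{s})+\mathbf{u_s},$$ where $I=I_{n(T+1)}$ (the inverse exists since $I-\mathcal{Z}\mathcal{A}-\mathcal{Z}\mathcal{B}\mathbf{K}$ is block lower triangular with identity diagonal blocks). Then the closed-loop trajectories satisfy $\mathbf{x}=\boldsymbol{\Phi_x}\mathbf{w}+\boldsymbol{\phi_x}$, $\mathbf{u}=\boldsymbol{\Phi_u}\mathbf{w}+\boldsymbol{\phi_u}$, and: 1. The quadruple $\{\boldsymbol{\Phi_x},\boldsymbol{\phi_x},\boldsymbol{\Phi_u},\boldsymbol{\phi_u}\}$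 satisfies the affine constraint $$\begin{bmatrix} I-\mathcal{Z}\mathcal{A} & -\mathcal{Z}\mathcal{B}\end{bmatrix}\begin{bmatrix}\boldsymbol{\Phi_x} & \boldsymbol{\phi_x}\\ \boldsymbol{\Phi_u} & \boldsymbol{\phi_u}\end{bmatrix}=\begin{bmatrix} I & \mathcal{Z}\mathbf{s}\end{bmatrix}.\qquad (\star)$$ 2. Conversely, for any $\boldsymbol{\Phi_x}\in\mathbb{R}^{n(T+1)\times n(T+1)}$, $\boldsymbol{\Phi_u}\in\mathbb{R}^{m(T+1)\times n(T+1)}$ block lower triangular, and any $\boldsymbol{\phi_x}\in\mathbb{R}^{n(T+1)}$, $\boldsymbol{\phi_u}\in\mathbb{R}^{m(T+1)}$ satisfying $(\star)$, the matrix $\boldsymbol{\Phi_x}$ is invertible, and the affine policy $\mathbf{u}=\mathbf{K}\mathbf{x}+\mathbf{u_s}$ with $\mathbf{K}=\boldsymbol{\Phi_u}\boldsymbol{\Phi_x}^{-1}$ and $\mathbf{u_s}=\boldsymbol{\phi_u}-\boldsymbol{\Phi_u}\boldsymbol{\Phi_x}^{-1}\boldsymbol{\phi_x}$ achieves exactly these maps, i.e. $(I-\mathcal{Z}\mathcal{A}-\mathcal{Z}\mathcal{B}\mathbf{K})^{-1}=\boldsymbol{\Phi_x}$, $\mathbf{K}(I-\mathcal{Z}\mathcal{A}-\mathcal{Z}\mathcal{B}\mathbf{K})^{-1}=\boldsymbol{\Phi_u}$, $\boldsymbol{\Phi_x}\mathcal{Z}(\mathcal{B}\mathbf{u_s}+\mathbf{s})=\boldsymbol{\phi_x}$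 and $\boldsymbol{\Phi_u}\mathcal{Z}(\mathcal{B}\mathbf{u_s}+\mathbf{s})+\mathbf{u_s}=\boldsymbol{\phi_u}$.
   Context: Signals over the horizon are stacked: $\mathbf{x}=[x_0^\top,\dots,x_T^\top]^\top\in\mathbb{R}^{n(T+1)}$, $\mathbf{u}=[u_0^\top,\dots,u_T^\top]^\top\in\mathbb{R}^{m(T+1)}$, $\mathbf{w}=[x(0)^\top,w(0)^\top,\dots,w(T-1)^\top]^\top\in\mathbb{R}^{n(T+1)}$ (initial state followed by disturbances), and $\mathbf{s}=[s^\top,\dots,s^\top,\mathbf{0}_n^\top]^\top\in\mathbb{R}^{n(T+1)}$ ($T$ copies of $s$ followed by a zero block). $\mathcal{A}=\mathrm{diag}(A(0),\dots,A(T-1),\mathbf{0}_{n\times n})$ and $\mathcal{B}=\mathrm{diag}(B(0),\dots,B(T-1),\mathbf{0}_{n\times m})$ are block-diagonal. $\mathcal{Z}\in\mathbb{R}^{n(T+1)\times n(T+1)}$ is the block-downshift operator: identity blocks $I_n$ on the first block subdiagonal and zeros elsewhere. With this notation the dynamics over the horizon read $\mathbf{x}=\mathcal{Z}\mathcal{A}\mathbf{x}+\mathcal{Z}\mathcal{B}\mathbf{u}+\mathcal{Z}\mathbf{s}+\mathbf{w}$. *)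

theory Defs
  imports "Jordan_Normal_Form.Matrix"
begin

text \<open>Stacked horizon objects. Indices range over 0..n(T+1)-1; entry i lies in block i div n
  at position i mod n.\<close>

definition Zop :: "nat \<Rightarrow> nat \<Rightarrow> real mat" where
  "Zop n T = mat (n*(T+1)) (n*(T+1))
     (\<lambda>(i,j). if i div n = j div n + 1 \<and> i mod n = j mod n then 1 else 0)"

definition calA :: "nat \<Rightarrow> nat \<Rightarrow> (nat \<Rightarrow> real mat) \<Rightarrow> real mat" where
  "calA n T A = mat (n*(T+1)) (n*(T+1))
     (\<lambda>(i,j). if i div n = j div n \<and> i div n < T then A (i div n) $$ (i mod n, j mod n) else 0)"

definition calB :: "nat \<Rightarrow> nat \<Rightarrow> nat \<Rightarrow> (nat \<Rightarrow> real mat) \<Rightarrow> real mat" where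
  "calB n m T B = mat (n*(T+1)) (m*(T+1))
     (\<lambda>(i,j). if i div n = j div m \<and> i div n < T then B (i div n) $$ (i mod n, j mod m) else 0)"

definition sbold :: "nat \<Rightarrow> nat \<Rightarrow> real vec \<Rightarrow> real vec" where
  "sbold n T s = vec (n*(T+1)) (\<lambda>i. if i div n < T then s $ (i mod n) else 0)"

definition block_lower_tri :: "nat \<Rightarrow> nat \<Rightarrow> nat \<Rightarrow> real mat \<Rightarrow> bool" where
  "block_lower_tri p q T M \<longleftrightarrow> M \<in> carrier_mat (p*(T+1)) (q*(T+1)) \<and>
     (\<forall>i j. i < p*(T+1) \<longrightarrow> j < q*(T+1) \<longrightarrow> i div p < j div q \<longrightarrow> M $$ (i,j) = 0)"

text \<open>The (two-sided) inverse of a square matrix (meaningful when it is invertible).\<close>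
definition the_inv_mat :: "real mat \<Rightarrow> real mat" where
  "the_inv_mat M = (SOME P. P \<in> carrier_mat (dim_row M) (dim_row M) \<and> inverts_mat M P \<and> inverts_mat P M)"

end

theory Submission
  imports Defs "Jordan_Normal_Form.Determinant"
begin

declare minus_carrier_mat[simp]

lemma Zop_entry:
  assumes n: "0 < n" and i: "i < n*(T+1)" and k: "k < n*(T+1)"
  shows "Zop n T $$ (i,k) = (if i = k + n then 1 else 0)"
proof -
  have "(i div n = k div n + 1 \<and> i mod n = k mod n) \<longleftrightarrow> i = k + n"
  proof
    assume h: "i div n = k div n + 1 \<and> i mod n = k mod n"
    have "i = n * (i div n) + i mod n" by simp
    also have "\<dots> = n * (k div n) + k mod n + n" using h by (simp add: algebra_simps)
    also have "\<dots> = k + n" by simp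
    finally show "i = k + n" .
  next
    assume "i = k + n" thus "i div n = k div n + 1 \<and> i mod n = k mod n" using n by simp
  qed
  thus ?thesis using i k unfolding Zop_def by simp
qed

lemma Zop_carrier[simp]: "Zop n T \<in> carrier_mat (n*(T+1)) (n*(T+1))"
  unfolding Zop_def by simp

lemma Zop_mult_entry:
  assumes n: "0 < n" and M: "M \<in> carrier_mat (n*(T+1)) c" and i: "i < n*(T+1)" and j: "j < c"
  shows "(Zop n T * M) $$ (i,j) = (if n \<le> i then M $$ (i-n,j) else 0)"
proof -
  have "(Zop n T * M) $$ (i,j) = (\<Sum>k\<in>{0..<n*(T+1)}. Zop n T $$ (i,k) * M $$ (k,j))"
    using M i j Zop_carrier[of n T] by (simp add: scalar_prod_def)
  also have "\<dots> = (\<Sum>k\<in>{0..<n*(T+1)}. if k = i - n \<and> n \<le> i then M $$ (k,j) else 0)"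
    by (rule sum.cong, simp, subst Zop_entry[OF n i], auto)
  also have "\<dots> = (if n \<le> i then M $$ (i-n,j) else 0)"
    using i by (cases "n \<le> i", auto)
  finally show ?thesis .
qed

lemma blt_mult:
  assumes P: "block_lower_tri p q T P" and Q: "block_lower_tri q r T Q" and q: "0 < q"
  shows "block_lower_tri p r T (P * Q)"
  unfolding block_lower_tri_def
proof (intro conjI allI impI)
  show "P * Q \<in> carrier_mat (p*(T+1)) (r*(T+1))" using P Q unfolding block_lower_tri_def by auto
  fix i j assume i: "i < p*(T+1)" and j: "j < r*(T+1)" and ij: "i div p < j div r"
  have "(P * Q) $$ (i,j) = (\<Sum>k\<in>{0..<q*(T+1)}. P $$ (i,k) * Q $$ (k,j))"
    using P Q i j unfolding block_lower_tri_def by (auto simp: scalar_prod_def)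
  also have "\<dots> = 0"
  proof (rule sum.neutral, intro ballI)
    fix k assume k: "k \<in> {0..<q*(T+1)}"
    show "P $$ (i,k) * Q $$ (k,j) = 0"
    proof (cases "i div p < k div q")
      case True thus ?thesis using P i k unfolding block_lower_tri_def by auto
    next
      case False hence "k div q < j div r" using ij by auto
      thus ?thesis using Q j k unfolding block_lower_tri_def by auto
    qed
  qed
  finally show "(P * Q) $$ (i,j) = 0" .
qed

lemma calA_blt: "block_lower_tri n n T (calA n T A)"
  unfolding block_lower_tri_def calA_def by auto

lemma calB_blt: "block_lower_tri n m T (calB n m T B)"
  unfolding block_lower_tri_def calB_def by auto

lemma Z_strict:
  assumes n: "0 < n" and M: "block_lower_tri n n T M"
    and i: "i < n*(T+1)" and j: "j < n*(T+1)" and ij: "i div n \<le> j div n"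
  shows "(Zop n T * M) $$ (i,j) = 0"
proof -
  have Mc: "M \<in> carrier_mat (n*(T+1)) (n*(T+1))" using M unfolding block_lower_tri_def by auto
  show ?thesis
  proof (cases "n \<le> i")
    case True
    have "i div n = Suc ((i - n) div n)" using True n by (simp add: le_div_geq)
    hence "(i - n) div n < j div n" using ij by linarith
    hence "M $$ (i-n,j) = 0" using M i j unfolding block_lower_tri_def by auto
    thus ?thesis using Zop_mult_entry[OF n Mc i j] True by simp
  qed (use Zop_mult_entry[OF n Mc i j] in simp)
qed

lemma unitri_inv:
  assumes M: "M \<in> carrier_mat N N" and d: "\<And>i. i < N \<Longrightarrow> M $$ (i,i) = 1"
    and l: "\<And>i j. i < j \<Longrightarrow> j < N \<Longrightarrow> M $$ (i,j) = (0::real)"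
  shows "\<exists>P \<in> carrier_mat N N. M * P = 1\<^sub>m N \<and> P * M = 1\<^sub>m N"
proof -
  have "det M = prod_list (diag_mat M)" by (rule det_lower_triangular[OF l M])
  also have "diag_mat M = map (\<lambda>i. 1) [0..<N]" using M d unfolding diag_mat_def by auto
  finally have "det M \<noteq> 0" by auto
  from det_non_zero_imp_unit[OF M this, of undefined]
  show ?thesis unfolding Units_def ring_mat_def by auto
qed

lemma the_inv_eq:
  assumes L: "L \<in> carrier_mat N N" and P: "P \<in> carrier_mat N N" and LP: "L * P = 1\<^sub>m N"
  shows "the_inv_mat L = P" "invertible_mat L"
proof -
  have PL: "P * L = 1\<^sub>m N" by (rule mat_mult_left_right_inverse[OF L P LP])
  have ex: "P \<in> carrier_mat (dim_row L) (dim_row L) \<and> inverts_mat L P \<and> inverts_mat P L"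
    using L P LP PL unfolding inverts_mat_def by auto
  show "invertible_mat L" using ex L unfolding invertible_mat_def square_mat.simps by auto
  let ?Q = "the_inv_mat L"
  have Q: "?Q \<in> carrier_mat (dim_row L) (dim_row L) \<and> inverts_mat L ?Q \<and> inverts_mat ?Q L"
    unfolding the_inv_mat_def by (rule someI, rule ex)
  hence Qc: "?Q \<in> carrier_mat N N" and QL: "?Q * L = 1\<^sub>m N" using L unfolding inverts_mat_def by auto
  have "?Q = ?Q * (L * P)" using Qc LP by simp
  also have "\<dots> = (?Q * L) * P" using Qc L P by (simp add: assoc_mult_mat)
  also have "\<dots> = P" using QL P by simp
  finally show "the_inv_mat L = P" .
qed

lemma part1:
  fixes Z cA cB K I :: "real mat" and us sb :: "real vec"
  assumes n: "0 < n" and m: "0 < m" and Zd: "Z = Zop n T"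
    and cA: "block_lower_tri n n T cA" and cB: "block_lower_tri n m T cB"
    and sb: "sb \<in> carrier_vec (n*(T+1))" and Id: "I = 1\<^sub>m (n*(T+1))"
    and K: "block_lower_tri m n T K" and us: "us \<in> carrier_vec (m*(T+1))"
  shows "(let L = I - Z * cA - Z * cB * K;
           Phix = the_inv_mat L;
           phix = Phix *\<^sub>v (Z *\<^sub>v (cB *\<^sub>v us + sb));
           Phiu = K * the_inv_mat L;
           phiu = Phiu *\<^sub>v (Z *\<^sub>v (cB *\<^sub>v us + sb)) + us
       in invertible_mat L \<and>
          (\<forall>x w. x \<in> carrier_vec (n*(T+1)) \<longrightarrow> w \<in> carrier_vec (n*(T+1)) \<longrightarrow>
              x = (Z * cA) *\<^sub>v x + (Z * cB) *\<^sub>v (K *\<^sub>v x + us) + Z *\<^sub>v sb + w \<longrightarrow>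
              x = Phix *\<^sub>v w + phix \<and> K *\<^sub>v x + us = Phiu *\<^sub>v w + phiu) \<and>
          (I - Z * cA) * Phix - (Z * cB) * Phiu = I \<and>
          (I - Z * cA) *\<^sub>v phix - (Z * cB) *\<^sub>v phiu = Z *\<^sub>v sb)"
proof -
  define N where "N = n*(T+1)"
  define M where "M = m*(T+1)"
  have Zc: "Z \<in> carrier_mat N N" unfolding Zd N_def by (rule Zop_carrier)
  have cAc: "cA \<in> carrier_mat N N" using cA unfolding block_lower_tri_def N_def by auto
  have cBc: "cB \<in> carrier_mat N M" using cB unfolding block_lower_tri_def N_def M_def by auto
  have Kc: "K \<in> carrier_mat M N" using K unfolding block_lower_tri_def N_def M_def by auto
  have Ic: "I \<in> carrier_mat N N" unfolding Id N_def by simp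
  have sbc: "sb \<in> carrier_vec N" using sb unfolding N_def .
  have usc: "us \<in> carrier_vec M" using us unfolding M_def .
  have IN: "I = 1\<^sub>m N" unfolding Id N_def ..
  define G where "G = Z * cB"
  have Gc: "G \<in> carrier_mat N M" unfolding G_def using Zc cBc by auto
  have ZA: "Z * cA \<in> carrier_mat N N" using Zc cAc by auto
  have GK: "G * K \<in> carrier_mat N N" using Gc Kc by auto
  note dims = carrier_matD[OF ZA] carrier_matD[OF GK] carrier_matD[OF Zc] carrier_matD[OF Gc]
  define L where "L = I - Z * cA - Z * cB * K"
  have L': "L = I - Z * cA - G * K" unfolding L_def G_def ..
  have Lc: "L \<in> carrier_mat N N" unfolding L' using Ic ZA GK by auto
  have cBK: "block_lower_tri n n T (cB * K)" by (rule blt_mult[OF cB K m])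
  have GKeq: "G * K = Z * (cB * K)" unfolding G_def using Zc cBc Kc by (simp add: assoc_mult_mat)
  have "\<exists>P \<in> carrier_mat N N. L * P = 1\<^sub>m N \<and> P * L = 1\<^sub>m N"
  proof (rule unitri_inv[OF Lc])
    fix i assume i: "i < N"
    have "(Z * cA) $$ (i,i) = 0" unfolding Zd
      by (rule Z_strict[OF n cA], insert i, auto simp: N_def)
    moreover have "(G * K) $$ (i,i) = 0" unfolding GKeq Zd
      by (rule Z_strict[OF n cBK], insert i, auto simp: N_def)
    ultimately show "L $$ (i,i) = 1" unfolding L' using i dims by (simp add: IN)
  next
    fix i j assume ij: "i < j" and j: "j < N"
    have d: "i div n \<le> j div n" using ij by (simp add: div_le_mono)
    have "(Z * cA) $$ (i,j) = 0" unfolding Zd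
      by (rule Z_strict[OF n cA], insert ij j d, auto simp: N_def)
    moreover have "(G * K) $$ (i,j) = 0" unfolding GKeq Zd
      by (rule Z_strict[OF n cBK], insert ij j d, auto simp: N_def)
    ultimately show "L $$ (i,j) = 0" unfolding L' using ij j dims by (simp add: IN)
  qed
  then obtain P where Pc: "P \<in> carrier_mat N N" and LP: "L * P = 1\<^sub>m N" and PL: "P * L = 1\<^sub>m N" by auto
  have invL: "the_inv_mat L = P" "invertible_mat L" using the_inv_eq[OF Lc Pc LP] by auto
  define z where "z = Z *\<^sub>v (cB *\<^sub>v us + sb)"
  have zc: "z \<in> carrier_vec N" unfolding z_def carrier_vec_def using dims by simp
  have L3: "z = G *\<^sub>v us + Z *\<^sub>v sb" unfolding z_def G_def
    using Zc cBc usc sbc by (simp add: mult_add_distrib_mat_vec assoc_mult_mat_vec)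
  have KPc: "K * P \<in> carrier_mat M N" using Kc Pc by auto
  have main1: "\<forall>x w. x \<in> carrier_vec N \<longrightarrow> w \<in> carrier_vec N \<longrightarrow>
              x = (Z * cA) *\<^sub>v x + (Z * cB) *\<^sub>v (K *\<^sub>v x + us) + Z *\<^sub>v sb + w \<longrightarrow>
              x = P *\<^sub>v w + P *\<^sub>v z \<and> K *\<^sub>v x + us = (K * P) *\<^sub>v w + ((K * P) *\<^sub>v z + us)"
  proof (intro allI impI)
    fix x w assume x: "x \<in> carrier_vec N" and w: "w \<in> carrier_vec N"
      and eq: "x = (Z * cA) *\<^sub>v x + (Z * cB) *\<^sub>v (K *\<^sub>v x + us) + Z *\<^sub>v sb + w"
    have L1: "L *\<^sub>v x = x - (Z * cA) *\<^sub>v x - (G * K) *\<^sub>v x" unfolding L'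
      using minus_mult_distrib_mat_vec[OF minus_carrier_mat[OF ZA, of I] GK x]
        minus_mult_distrib_mat_vec[OF Ic ZA x] Ic x by (simp add: IN)
    have L2: "G *\<^sub>v (K *\<^sub>v x + us) = (G * K) *\<^sub>v x + G *\<^sub>v us"
      using Gc Kc x usc by (simp add: mult_add_distrib_mat_vec assoc_mult_mat_vec)
    have Lx: "L *\<^sub>v x = z + w"
    proof (rule eq_vecI)
      fix i assume i: "i < dim_vec (z + w)"
      hence iN: "i < N" using zc w by auto
      have "x $ i = ((Z * cA) *\<^sub>v x) $ i + (G *\<^sub>v (K *\<^sub>v x + us)) $ i + (Z *\<^sub>v sb) $ i + w $ i"
        using eq iN ZA Gc Zc w by (metis G_def index_add_vec carrier_matD carrier_vecD dim_mult_mat_vec)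
      thus "(L *\<^sub>v x) $ i = (z + w) $ i"
        unfolding L1 L2 L3 using iN ZA Gc GK Zc w x by simp
    qed (use Lc zc w in auto)
    have xP: "x = P *\<^sub>v w + P *\<^sub>v z"
    proof -
      have "x = (P * L) *\<^sub>v x" using PL x by simp
      also have "\<dots> = P *\<^sub>v (z + w)" using Pc Lc x by (simp add: assoc_mult_mat_vec Lx)
      also have "\<dots> = P *\<^sub>v w + P *\<^sub>v z" using Pc zc w by (simp add: mult_add_distrib_mat_vec comm_add_vec)
      finally show ?thesis .
    qed
    have "K *\<^sub>v x = (K * P) *\<^sub>v w + (K * P) *\<^sub>v z"
      unfolding xP using Kc Pc zc w by (simp add: mult_add_distrib_mat_vec assoc_mult_mat_vec)
    hence "K *\<^sub>v x + us = (K * P) *\<^sub>v w + ((K * P) *\<^sub>v z + us)"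
      using assoc_add_vec[OF mult_mat_vec_carrier[OF KPc w] mult_mat_vec_carrier[OF KPc zc] usc] by simp
    with xP show "x = P *\<^sub>v w + P *\<^sub>v z \<and> K *\<^sub>v x + us = (K * P) *\<^sub>v w + ((K * P) *\<^sub>v z + us)" by simp
  qed
  have C1: "(I - Z * cA) * P - G * (K * P) = I"
  proof -
    have "(I - Z * cA) * P - G * (K * P) = (I - Z * cA) * P - (G * K) * P"
      using Gc Kc Pc by (simp add: assoc_mult_mat)
    also have "\<dots> = L * P" unfolding L' 
      by (simp only: minus_mult_distrib_mat[OF minus_carrier_mat[OF ZA, of I] GK Pc] minus_mult_distrib_mat[OF Ic ZA Pc])
    finally show ?thesis using LP IN by simp
  qed
  have C2: "(I - Z * cA) *\<^sub>v (P *\<^sub>v z) - G *\<^sub>v ((K * P) *\<^sub>v z + us) = Z *\<^sub>v sb"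
  proof -
    have a: "(I - Z * cA) *\<^sub>v (P *\<^sub>v z) = ((I - Z * cA) * P) *\<^sub>v z"
      using assoc_mult_mat_vec[OF minus_carrier_mat[OF ZA, of I] Pc zc] by simp
    have b: "G *\<^sub>v ((K * P) *\<^sub>v z + us) = (G * (K * P)) *\<^sub>v z + G *\<^sub>v us"
      using Gc KPc zc usc by (simp add: mult_add_distrib_mat_vec assoc_mult_mat_vec)
    have X: "(I - Z * cA) * P \<in> carrier_mat N N" by (rule mult_carrier_mat[OF minus_carrier_mat[OF ZA] Pc])
    have Y: "G * (K * P) \<in> carrier_mat N N" by (rule mult_carrier_mat[OF Gc KPc])
    have c: "((I - Z * cA) * P) *\<^sub>v z - (G * (K * P)) *\<^sub>v z = z"
      using minus_mult_distrib_mat_vec[OF X Y zc, symmetric] C1 IN zc by simp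
    show ?thesis
    proof (rule eq_vecI)
      fix i assume i: "i < dim_vec (Z *\<^sub>v sb)"
      hence iN: "i < N" using dims by simp
      have e1: "(((I - Z * cA) * P) *\<^sub>v z) $ i - ((G * (K * P)) *\<^sub>v z) $ i = z $ i"
        using arg_cong[OF c, of "\<lambda>v. v $ i"] iN carrier_matD[OF X] carrier_matD[OF Y] by simp
      have e2: "z $ i = (G *\<^sub>v us) $ i + (Z *\<^sub>v sb) $ i"
        using arg_cong[OF L3, of "\<lambda>v. v $ i"] iN dims by simp
      show "((I - Z * cA) *\<^sub>v (P *\<^sub>v z) - G *\<^sub>v ((K * P) *\<^sub>v z + us)) $ i = (Z *\<^sub>v sb) $ i"
        unfolding a b using iN dims carrier_matD[OF X] carrier_matD[OF Y] e1 e2 by simp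
    qed (use Zc Ic Pc Gc in auto)
  qed
  have e: "the_inv_mat (I - Z * cA - Z * cB * K) = P" using invL(1) unfolding L_def .
  have e2: "invertible_mat (I - Z * cA - Z * cB * K)" using invL(2) unfolding L_def .
  show ?thesis unfolding Let_def e
    using e2 main1 C1 C2 unfolding N_def G_def z_def by auto
qed

lemma part2:
  fixes Z cA cB I Phix Phiu :: "real mat" and sb phix phiu :: "real vec"
  assumes n: "0 < n" and m: "0 < m" and Zd: "Z = Zop n T"
    and cA: "block_lower_tri n n T cA" and cB: "block_lower_tri n m T cB"
    and sb: "sb \<in> carrier_vec (n*(T+1))" and Id: "I = 1\<^sub>m (n*(T+1))"
    and Px: "block_lower_tri n n T Phix" and Pu: "block_lower_tri m n T Phiu"
    and px: "phix \<in> carrier_vec (n*(T+1))" and pu: "phiu \<in> carrier_vec (m*(T+1))"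
    and E1: "(I - Z * cA) * Phix - (Z * cB) * Phiu = I"
    and E2: "(I - Z * cA) *\<^sub>v phix - (Z * cB) *\<^sub>v phiu = Z *\<^sub>v sb"
  shows "invertible_mat Phix \<and>
      (let K = Phiu * the_inv_mat Phix;
           us = phiu - (Phiu * the_inv_mat Phix) *\<^sub>v phix;
           L = I - Z * cA - Z * cB * K
       in invertible_mat L \<and>
          the_inv_mat L = Phix \<and>
          K * the_inv_mat L = Phiu \<and>
          Phix *\<^sub>v (Z *\<^sub>v (cB *\<^sub>v us + sb)) = phix \<and>
          Phiu *\<^sub>v (Z *\<^sub>v (cB *\<^sub>v us + sb)) + us = phiu)"
proof -
  define N where "N = n*(T+1)"
  define M where "M = m*(T+1)"
  have Zc: "Z \<in> carrier_mat N N" unfolding Zd N_def by (rule Zop_carrier)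
  have cAc: "cA \<in> carrier_mat N N" using cA unfolding block_lower_tri_def N_def by auto
  have cBc: "cB \<in> carrier_mat N M" using cB unfolding block_lower_tri_def N_def M_def by auto
  have Pxc: "Phix \<in> carrier_mat N N" using Px unfolding block_lower_tri_def N_def by auto
  have Puc: "Phiu \<in> carrier_mat M N" using Pu unfolding block_lower_tri_def N_def M_def by auto
  have Ic: "I \<in> carrier_mat N N" unfolding Id N_def by simp
  have IN: "I = 1\<^sub>m N" unfolding Id N_def ..
  have sbc: "sb \<in> carrier_vec N" using sb unfolding N_def .
  have pxc: "phix \<in> carrier_vec N" using px unfolding N_def .
  have puc: "phiu \<in> carrier_vec M" using pu unfolding M_def .
  define G where "G = Z * cB"
  have Gc: "G \<in> carrier_mat N M" unfolding G_def using Zc cBc by auto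
  have ZA: "Z * cA \<in> carrier_mat N N" using Zc cAc by auto
  have ZAP: "(Z * cA) * Phix = Z * (cA * Phix)" using Zc cAc Pxc by (simp add: assoc_mult_mat)
  have GP: "G * Phiu = Z * (cB * Phiu)" unfolding G_def using Zc cBc Puc by (simp add: assoc_mult_mat)
  have b1: "block_lower_tri n n T (cA * Phix)" by (rule blt_mult[OF cA Px n])
  have b2: "block_lower_tri n n T (cB * Phiu)" by (rule blt_mult[OF cB Pu m])
  have ZAPc: "(Z * cA) * Phix \<in> carrier_mat N N" using ZA Pxc by auto
  have GPc: "G * Phiu \<in> carrier_mat N N" using Gc Puc by auto
  have E1': "Phix - (Z * cA) * Phix - G * Phiu = I"
    using E1 minus_mult_distrib_mat[OF Ic ZA Pxc] Pxc unfolding G_def IN by simp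
  have key: "Phix $$ (i,j) = 1\<^sub>m N $$ (i,j)" if ij: "i \<le> j" and j: "j < N" for i j
  proof -
    have d: "i div n \<le> j div n" using ij by (simp add: div_le_mono)
    have a: "((Z * cA) * Phix) $$ (i,j) = 0" unfolding ZAP
      using Z_strict[OF n b1, of i j] ij j d unfolding Zd N_def by auto
    have b: "(G * Phiu) $$ (i,j) = 0" unfolding GP
      using Z_strict[OF n b2, of i j] ij j d unfolding Zd N_def by auto
    have "(Phix - (Z * cA) * Phix - G * Phiu) $$ (i,j) = I $$ (i,j)" using E1' by simp
    hence "Phix $$ (i,j) = I $$ (i,j)" using a b ij j carrier_matD[OF ZAPc] carrier_matD[OF GPc] by simp
    thus ?thesis unfolding IN .
  qed
  have "\<exists>Q \<in> carrier_mat N N. Phix * Q = 1\<^sub>m N \<and> Q * Phix = 1\<^sub>m N"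
    by (rule unitri_inv[OF Pxc], use key in auto)
  then obtain Q where Qc: "Q \<in> carrier_mat N N" and PQ: "Phix * Q = 1\<^sub>m N" and QP: "Q * Phix = 1\<^sub>m N" by auto
  have iP: "the_inv_mat Phix = Q" "invertible_mat Phix" using the_inv_eq[OF Pxc Qc PQ] by auto
  define K where "K = Phiu * Q"
  have Kc: "K \<in> carrier_mat M N" unfolding K_def using Puc Qc by auto
  have GK: "G * K \<in> carrier_mat N N" using Gc Kc by auto
  define L where "L = I - Z * cA - Z * cB * K"
  have L': "L = I - Z * cA - G * K" unfolding L_def G_def ..
  have Lc: "L \<in> carrier_mat N N" unfolding L' using GK by simp
  have KP: "K * Phix = Phiu" unfolding K_def using Puc Qc Pxc QP by (simp add: assoc_mult_mat)
  have GKP: "(G * K) * Phix = G * Phiu" using Gc Kc Pxc KP by (simp add: assoc_mult_mat)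
  have LP: "L * Phix = 1\<^sub>m N"
  proof -
    have "L * Phix = (I - Z * cA) * Phix - (G * K) * Phix" unfolding L'
      by (rule minus_mult_distrib_mat[OF minus_carrier_mat[OF ZA, of I] GK Pxc])
    also have "\<dots> = I" unfolding GKP using E1 unfolding G_def .
    finally show ?thesis unfolding IN .
  qed
  have iL: "the_inv_mat L = Phix" "invertible_mat L" using the_inv_eq[OF Lc Pxc LP] by auto
  have PL: "Phix * L = 1\<^sub>m N" by (rule mat_mult_left_right_inverse[OF Lc Pxc LP])
  define us where "us = phiu - K *\<^sub>v phix"
  have Kpx: "K *\<^sub>v phix \<in> carrier_vec M" using Kc pxc by simp
  have usc: "us \<in> carrier_vec M" unfolding us_def using Kpx puc by simp
  define z where "z = Z *\<^sub>v (cB *\<^sub>v us + sb)"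
  note dims = carrier_matD[OF ZA] carrier_matD[OF GK] carrier_matD[OF Zc] carrier_matD[OF Gc]
    carrier_matD[OF Kc] carrier_matD[OF Pxc] carrier_matD[OF Puc]
  have zc: "z \<in> carrier_vec N" unfolding z_def carrier_vec_def using dims by simp
  have L3: "z = G *\<^sub>v us + Z *\<^sub>v sb" unfolding z_def G_def
    using Zc cBc usc sbc by (simp add: mult_add_distrib_mat_vec assoc_mult_mat_vec)
  have Gus: "G *\<^sub>v us = G *\<^sub>v phiu - G *\<^sub>v (K *\<^sub>v phix)" unfolding us_def
    by (rule mult_minus_distrib_mat_vec[OF Gc puc Kpx])
  have GKv: "(G * K) *\<^sub>v phix = G *\<^sub>v (K *\<^sub>v phix)" using Gc Kc pxc by simp
  have L1: "L *\<^sub>v phix = (I - Z * cA) *\<^sub>v phix - (G * K) *\<^sub>v phix" unfolding L'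
    by (rule minus_mult_distrib_mat_vec[OF minus_carrier_mat[OF ZA, of I] GK pxc])
  have E2': "(I - Z * cA) *\<^sub>v phix - G *\<^sub>v phiu = Z *\<^sub>v sb" using E2 unfolding G_def .
  have Lpx: "L *\<^sub>v phix = z"
  proof (rule eq_vecI)
    fix i assume i: "i < dim_vec z"
    hence iN: "i < N" using zc by auto
    have e1: "((I - Z * cA) *\<^sub>v phix) $ i - (G *\<^sub>v phiu) $ i = (Z *\<^sub>v sb) $ i"
      using arg_cong[OF E2', of "\<lambda>v. v $ i"] iN dims by simp
    have e2: "z $ i = (G *\<^sub>v us) $ i + (Z *\<^sub>v sb) $ i"
      using arg_cong[OF L3, of "\<lambda>v. v $ i"] iN dims by simp
    have e3: "(G *\<^sub>v us) $ i = (G *\<^sub>v phiu) $ i - (G *\<^sub>v (K *\<^sub>v phix)) $ i"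
      using arg_cong[OF Gus, of "\<lambda>v. v $ i"] iN dims by simp
    show "(L *\<^sub>v phix) $ i = z $ i" unfolding L1 GKv using iN dims e1 e2 e3 by simp
  qed (use Lc zc in auto)
  have pxz: "Phix *\<^sub>v z = phix"
  proof -
    have "phix = (Phix * L) *\<^sub>v phix" using PL pxc by simp
    also have "\<dots> = Phix *\<^sub>v z" using Pxc Lc pxc Lpx by simp
    finally show ?thesis by simp
  qed
  have puz: "Phiu *\<^sub>v z + us = phiu"
  proof -
    have "Phiu *\<^sub>v z = K *\<^sub>v phix" unfolding KP[symmetric] pxz[symmetric] using Kc Pxc zc by simp
    thus ?thesis unfolding us_def using Kpx puc dims by (intro eq_vecI, auto)
  qed
  have e: "the_inv_mat (I - Z * cA - Z * cB * (Phiu * Q)) = Phix" using iL(1) unfolding L_def K_def .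
  have e2: "invertible_mat (I - Z * cA - Z * cB * (Phiu * Q))" using iL(2) unfolding L_def K_def .
  show ?thesis unfolding Let_def iP(1) e
    using iP(2) e2 KP pxz puz unfolding K_def us_def z_def by auto
qed

theorem theorem1:
  fixes n m T :: nat and A B :: "nat \<Rightarrow> real mat" and s :: "real vec"
  assumes n_pos: "0 < n" and m_pos: "0 < m"
    and A_dim: "\<And>t. t < T \<Longrightarrow> A t \<in> carrier_mat n n"
    and B_dim: "\<And>t. t < T \<Longrightarrow> B t \<in> carrier_mat n m"
    and s_dim: "s \<in> carrier_vec n"
  defines "Z \<equiv> Zop n T" and "cA \<equiv> calA n T A" and "cB \<equiv> calB n m T B"
    and "sb \<equiv> sbold n T s" and "I \<equiv> 1\<^sub>m (n*(T+1))"
  shows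
   "(\<forall>K us. block_lower_tri m n T K \<longrightarrow> us \<in> carrier_vec (m*(T+1)) \<longrightarrow>
      (let L = I - Z * cA - Z * cB * K;
           Phix = the_inv_mat L;
           phix = Phix *\<^sub>v (Z *\<^sub>v (cB *\<^sub>v us + sb));
           Phiu = K * the_inv_mat L;
           phiu = Phiu *\<^sub>v (Z *\<^sub>v (cB *\<^sub>v us + sb)) + us
       in invertible_mat L \<and>
          (\<forall>x w. x \<in> carrier_vec (n*(T+1)) \<longrightarrow> w \<in> carrier_vec (n*(T+1)) \<longrightarrow>
              x = (Z * cA) *\<^sub>v x + (Z * cB) *\<^sub>v (K *\<^sub>v x + us) + Z *\<^sub>v sb + w \<longrightarrow>
              x = Phix *\<^sub>v w + phix \<and> K *\<^sub>v x + us = Phiu *\<^sub>v w + phiu) \<and>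
          (I - Z * cA) * Phix - (Z * cB) * Phiu = I \<and>
          (I - Z * cA) *\<^sub>v phix - (Z * cB) *\<^sub>v phiu = Z *\<^sub>v sb))
    \<and>
    (\<forall>Phix Phiu phix phiu.
      block_lower_tri n n T Phix \<longrightarrow> block_lower_tri m n T Phiu \<longrightarrow>
      phix \<in> carrier_vec (n*(T+1)) \<longrightarrow> phiu \<in> carrier_vec (m*(T+1)) \<longrightarrow>
      (I - Z * cA) * Phix - (Z * cB) * Phiu = I \<longrightarrow>
      (I - Z * cA) *\<^sub>v phix - (Z * cB) *\<^sub>v phiu = Z *\<^sub>v sb \<longrightarrow>
      invertible_mat Phix \<and>
      (let K = Phiu * the_inv_mat Phix;
           us = phiu - (Phiu * the_inv_mat Phix) *\<^sub>v phix;
           L = I - Z * cA - Z * cB * K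
       in invertible_mat L \<and>
          the_inv_mat L = Phix \<and>
          K * the_inv_mat L = Phiu \<and>
          Phix *\<^sub>v (Z *\<^sub>v (cB *\<^sub>v us + sb)) = phix \<and>
          Phiu *\<^sub>v (Z *\<^sub>v (cB *\<^sub>v us + sb)) + us = phiu))"
proof (intro conjI allI impI)
  fix K :: "real mat" and us :: "real vec" assume "block_lower_tri m n T K" "us \<in> carrier_vec (m*(T+1))"
  thus "let L = I - Z * cA - Z * cB * K;
           Phix = the_inv_mat L;
           phix = Phix *\<^sub>v (Z *\<^sub>v (cB *\<^sub>v us + sb));
           Phiu = K * the_inv_mat L;
           phiu = Phiu *\<^sub>v (Z *\<^sub>v (cB *\<^sub>v us + sb)) + us
       in invertible_mat L \<and>
          (\<forall>x w. x \<in> carrier_vec (n*(T+1)) \<longrightarrow> w \<in> carrier_vec (n*(T+1)) \<longrightarrow>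
              x = (Z * cA) *\<^sub>v x + (Z * cB) *\<^sub>v (K *\<^sub>v x + us) + Z *\<^sub>v sb + w \<longrightarrow>
              x = Phix *\<^sub>v w + phix \<and> K *\<^sub>v x + us = Phiu *\<^sub>v w + phiu) \<and>
          (I - Z * cA) * Phix - (Z * cB) * Phiu = I \<and>
          (I - Z * cA) *\<^sub>v phix - (Z * cB) *\<^sub>v phiu = Z *\<^sub>v sb"
    by (intro part1[OF n_pos m_pos Z_def[THEN meta_eq_to_obj_eq]])
       (auto simp: cA_def cB_def sb_def I_def calA_blt calB_blt sbold_def)
next
  fix Phix Phiu :: "real mat" and phix phiu :: "real vec"
  assume h: "block_lower_tri n n T Phix" "block_lower_tri m n T Phiu"
      "phix \<in> carrier_vec (n*(T+1))" "phiu \<in> carrier_vec (m*(T+1))"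
      "(I - Z * cA) * Phix - (Z * cB) * Phiu = I"
      "(I - Z * cA) *\<^sub>v phix - (Z * cB) *\<^sub>v phiu = Z *\<^sub>v sb"
  note r = part2[OF n_pos m_pos Z_def[THEN meta_eq_to_obj_eq], of cA cB sb I Phix Phiu phix phiu]
  have pre: "block_lower_tri n n T cA" "block_lower_tri n m T cB" "sb \<in> carrier_vec (n*(T+1))"
    "I = 1\<^sub>m (n*(T+1))" by (auto simp: cA_def cB_def sb_def I_def calA_blt calB_blt sbold_def)
  from r[OF pre h] show "invertible_mat Phix" by simp
  from r[OF pre h] show "let K = Phiu * the_inv_mat Phix;
           us = phiu - (Phiu * the_inv_mat Phix) *\<^sub>v phix;
           L = I - Z * cA - Z * cB * K
       in invertible_mat L \<and>
          the_inv_mat L = Phix \<and>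
          K * the_inv_mat L = Phiu \<and>
          Phix *\<^sub>v (Z *\<^sub>v (cB *\<^sub>v us + sb)) = phix \<and>
          Phiu *\<^sub>v (Z *\<^sub>v (cB *\<^sub>v us + sb)) + us = phiu" by simp
qed

end
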